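(* Let $I\subset\mathbb{N}^{d}$ be a finite nonempty set of multi-indices which is closed under the componentwise minimum, i.e. $i,j\in I$ implies $i\wedge j\in I$ where $(i\wedge j)_k=\min\{i_k,j_k\}$. Then the general coefficient problem for $I$ has exactly one solution, and it is given by hierarchical coefficients $w_i=1$ for all $i\in I{\downarrow}$. That is: there exists a unique family of real coefficients $(c_i)_{i\in I}$ with $\sum_{j\in I,\,j\ge i}c_j=1$ for every $i\in I{\downarrow}$, and this family is the unique maximiser of the general coefficient problem for $I$.
   Context: For multi-indices $i,j\in\mathbb{N}^d$, $i\le j$ means $i_k\le j_k$ for all $k=1,\dots,d$, and $\|i\|_1=\sum_k i_k$. For a finite $I\subset\mathbb{N}^d$, $I{\downarrow}:=\{i\in\mathbb{N}^d:\exists j\in I\text{ with } i\le j\}$. Given real coefficients $(c_i)_{i\in I}$, their hierarchical coefficients are $w_i:=\sum_{j\in I,\ j\ge i}c_j$ for $i\in I{\downarrow}$. The general coefficient problem (GCP) for $I$ is: among all families $(c_i)_{i\in I}$ of reals whose hierarchical coefficients satisfy $w_i\in\{0,1\}$ for every $i\in I{\downarrow}$, maximise $Q'(w):=\sum_{i\in I{\downarrow}}4^{-\|i\|_1}w_i$. (Equivalently, extending $c_i:=0$ for $i\in I{\downarrow}\setminus I$, $w=Mc$ with $M$ the $0/1$ matrix $M_{ij}=[j\ge i]$ on $I{\downarrow}$, and the GCP is a maximisation over binary $w$ on $I{\downarrow}$ subject to $(M^{-1}w)_i=0$ for $i\in I{\downarrow}\setminus I$.) A solution of the GCP is a maximising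 family $(c_i)_{i\in I}$. *)

theory Defs
  imports Complex_Main
begin

text \<open>Multi-indices in N^d are represented as functions nat \<Rightarrow> nat vanishing
  from coordinate d on. The order on functions is the pointwise order, and
  inf is the pointwise minimum.\<close>

definition multi_indices :: "nat \<Rightarrow> (nat \<Rightarrow> nat) set" where
  "multi_indices d = {i. \<forall>k\<ge>d. i k = 0}"

definition norm1 :: "nat \<Rightarrow> (nat \<Rightarrow> nat) \<Rightarrow> nat" where
  "norm1 d i = (\<Sum>k<d. i k)"

definition down_closure :: "(nat \<Rightarrow> nat) set \<Rightarrow> (nat \<Rightarrow> nat) set" where
  "down_closure I = {i. \<exists>j\<in>I. i \<le> j}"

text \<open>A family (c_i)_{i in I} is represented by a function vanishing outside I.\<close>
definition family_on :: "(nat \<Rightarrow> nat) set \<Rightarrow> ((nat \<Rightarrow> nat) \<Rightarrow> real) \<Rightarrow> bool" where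
  "family_on I c \<longleftrightarrow> (\<forall>i. i \<notin> I \<longrightarrow> c i = 0)"

definition hier_coeff :: "(nat \<Rightarrow> nat) set \<Rightarrow> ((nat \<Rightarrow> nat) \<Rightarrow> real) \<Rightarrow> (nat \<Rightarrow> nat) \<Rightarrow> real" where
  "hier_coeff I c i = (\<Sum>j\<in>{j\<in>I. i \<le> j}. c j)"

definition gcp_feasible :: "(nat \<Rightarrow> nat) set \<Rightarrow> ((nat \<Rightarrow> nat) \<Rightarrow> real) \<Rightarrow> bool" where
  "gcp_feasible I c \<longleftrightarrow> family_on I c \<and>
     (\<forall>i\<in>down_closure I. hier_coeff I c i = 0 \<or> hier_coeff I c i = 1)"

definition gcp_objective :: "nat \<Rightarrow> (nat \<Rightarrow> nat) set \<Rightarrow> ((nat \<Rightarrow> nat) \<Rightarrow> real) \<Rightarrow> real" where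
  "gcp_objective d I c = (\<Sum>i\<in>down_closure I. (1/4) ^ norm1 d i * hier_coeff I c i)"

definition gcp_solution :: "nat \<Rightarrow> (nat \<Rightarrow> nat) set \<Rightarrow> ((nat \<Rightarrow> nat) \<Rightarrow> real) \<Rightarrow> bool" where
  "gcp_solution d I c \<longleftrightarrow> gcp_feasible I c \<and>
     (\<forall>c'. gcp_feasible I c' \<longrightarrow> gcp_objective d I c' \<le> gcp_objective d I c)"

end

theory Submission
  imports Defs
begin

lemma exist_sol:
  fixes S :: "(nat \<Rightarrow> nat) set" and f :: "(nat \<Rightarrow> nat) \<Rightarrow> real"
  shows "finite S \<Longrightarrow> \<exists>c. family_on S c \<and> (\<forall>i\<in>S. (\<Sum>j\<in>{j\<in>S. i \<le> j}. c j) = f i)"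
proof (induction "card S" arbitrary: S rule: less_induct)
  case less
  show ?case
  proof (cases "S = {}")
    case True
    then show ?thesis by (auto simp: family_on_def)
  next
    case False
    obtain a where a: "a \<in> S" "\<forall>b\<in>S. b \<le> a \<longrightarrow> a = b"
      using finite_has_minimal[OF less.prems False] by blast
    define S' where "S' = S - {a}"
    have fin': "finite S'" using less.prems by (simp add: S'_def)
    have "card S' < card S" unfolding S'_def by (rule card_Diff1_less[OF less.prems a(1)])
    then obtain c' where c': "family_on S' c'" "\<forall>i\<in>S'. (\<Sum>j\<in>{j\<in>S'. i \<le> j}. c' j) = f i"
      using less.hyps fin' by blast
    define c where "c = c'(a := f a - (\<Sum>j\<in>{j\<in>S'. a \<le> j}. c' j))"
    have fam: "family_on S c"
      using c'(1) a(1) unfolding family_on_def c_def S'_def by auto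
    have eq: "\<forall>j\<in>S'. c j = c' j" by (auto simp: c_def S'_def)
    have "(\<Sum>j\<in>{j\<in>S. i \<le> j}. c j) = f i" if i: "i \<in> S" for i
    proof (cases "i = a")
      case True
      have set: "{j\<in>S. a \<le> j} = insert a {j\<in>S'. a \<le> j}" using a(1) by (auto simp: S'_def)
      have fin: "finite {j\<in>S'. a \<le> j}" using fin' by simp
      have "(\<Sum>j\<in>{j\<in>S'. a \<le> j}. c j) = (\<Sum>j\<in>{j\<in>S'. a \<le> j}. c' j)"
        using eq by (intro sum.cong) auto
      then show ?thesis using True set fin by (simp add: S'_def c_def)
    next
      case False
      have set: "{j\<in>S. i \<le> j} = {j\<in>S'. i \<le> j}"
        using a i False by (auto simp: S'_def)
      have "(\<Sum>j\<in>{j\<in>S'. i \<le> j}. c j) = (\<Sum>j\<in>{j\<in>S'. i \<le> j}. c' j)"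
        using eq by (intro sum.cong) auto
      then show ?thesis using set c'(2) i False by (simp add: S'_def)
    qed
    then show ?thesis using fam by blast
  qed
qed

lemma uniq_sol:
  fixes S :: "(nat \<Rightarrow> nat) set" and c c' :: "(nat \<Rightarrow> nat) \<Rightarrow> real"
  assumes fin: "finite S" and f1: "family_on S c" and f2: "family_on S c'"
    and eq: "\<forall>i\<in>S. (\<Sum>j\<in>{j\<in>S. i \<le> j}. c j) = (\<Sum>j\<in>{j\<in>S. i \<le> j}. c' j)"
  shows "c = c'"
proof (rule ccontr)
  assume ne: "c \<noteq> c'"
  define N where "N = {i\<in>S. c i \<noteq> c' i}"
  have "N \<noteq> {}"
  proof
    assume "N = {}"
    then have "\<forall>i. c i = c' i" using f1 f2 unfolding N_def family_on_def by (metis (mono_tags, lifting) empty_Collect_eq)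
    then show False using ne by auto
  qed
  moreover have "finite N" using fin by (simp add: N_def)
  ultimately obtain m where m: "m \<in> N" "\<forall>b\<in>N. m \<le> b \<longrightarrow> m = b"
    using finite_has_maximal by blast
  have mS: "m \<in> S" using m(1) by (simp add: N_def)
  define R where "R = {j\<in>S. m \<le> j} - {m}"
  have set: "{j\<in>S. m \<le> j} = insert m R" using mS by (auto simp: R_def)
  have finR: "finite R" "m \<notin> R" using fin by (auto simp: R_def)
  have "(\<Sum>j\<in>R. c j) = (\<Sum>j\<in>R. c' j)"
    using m(2) by (intro sum.cong) (auto simp: R_def N_def)
  moreover have "(\<Sum>j\<in>insert m R. c j) = (\<Sum>j\<in>insert m R. c' j)"
    using eq mS set by metis
  ultimately have "c m = c' m" using finR by simp
  then show False using m(1) by (simp add: N_def)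
qed

lemma fin_below:
  fixes j :: "nat \<Rightarrow> nat"
  assumes "j \<in> multi_indices d"
  shows "finite {i. i \<le> j}"
proof -
  have "{i. i \<le> j} \<subseteq> {f. \<forall>x. (x \<in> {..<d} \<longrightarrow> f x \<in> (\<Union>k<d. {..j k})) \<and> (x \<notin> {..<d} \<longrightarrow> f x = 0)}"
  proof
    fix i :: "nat \<Rightarrow> nat" assume "i \<in> {i. i \<le> j}"
    then have ij: "\<And>x. i x \<le> j x" by (simp add: le_fun_def)
    have j0: "\<And>x. x \<ge> d \<Longrightarrow> j x = 0" using assms by (simp add: multi_indices_def)
    show "i \<in> {f. \<forall>x. (x \<in> {..<d} \<longrightarrow> f x \<in> (\<Union>k<d. {..j k})) \<and> (x \<notin> {..<d} \<longrightarrow> f x = 0)}"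
    proof (intro CollectI allI conjI impI)
      fix x assume "x \<in> {..<d}" then show "i x \<in> (\<Union>k<d. {..j k})" using ij by blast
    next
      fix x assume "x \<notin> {..<d}" then show "i x = 0" using ij[of x] j0[of x] by simp
    qed
  qed
  moreover have "finite {f. \<forall>x. (x \<in> {..<d} \<longrightarrow> f x \<in> (\<Union>k<d. {..j k})) \<and> (x \<notin> {..<d} \<longrightarrow> f x = (0::nat))}"
    by (rule finite_set_of_finite_funs) auto
  ultimately show ?thesis by (rule finite_subset)
qed

lemma fin_down:
  assumes "finite I" "I \<subseteq> multi_indices d"
  shows "finite (down_closure I)"
proof -
  have "down_closure I = (\<Union>j\<in>I. {i. i \<le> j})" by (auto simp: down_closure_def)
  then show ?thesis using assms fin_below by auto
qed

lemma min_elem: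
  fixes I :: "(nat \<Rightarrow> nat) set"
  assumes "finite I" and cl: "\<And>i j. i \<in> I \<Longrightarrow> j \<in> I \<Longrightarrow> inf i j \<in> I"
    and i: "i \<in> down_closure I"
  shows "\<exists>m\<in>I. {j\<in>I. i \<le> j} = {j\<in>I. m \<le> j}"
proof -
  let ?J = "{j\<in>I. i \<le> j}"
  have "?J \<noteq> {}" using i by (auto simp: down_closure_def)
  moreover have "finite ?J" using assms(1) by simp
  ultimately obtain m where m: "m \<in> ?J" "\<forall>b\<in>?J. b \<le> m \<longrightarrow> m = b"
    using finite_has_minimal by blast
  have "m \<le> j" if "j \<in> ?J" for j
  proof -
    have "inf m j \<in> ?J" using that m(1) cl by auto
    then have "m = inf m j" using m(2) by auto
    then show ?thesis by (metis inf.cobounded2)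
  qed
  then have "{j\<in>I. i \<le> j} = {j\<in>I. m \<le> j}" using m(1) by (auto intro: order_trans)
  then show ?thesis using m(1) by blast
qed

theorem mainTheorem2:
  fixes d :: nat and I :: "(nat \<Rightarrow> nat) set"
  assumes "finite I" and "I \<noteq> {}" and "I \<subseteq> multi_indices d"
    and "\<And>i j. i \<in> I \<Longrightarrow> j \<in> I \<Longrightarrow> inf i j \<in> I"
  shows "(\<exists>!c. family_on I c \<and> (\<forall>i\<in>down_closure I. hier_coeff I c i = 1))
    \<and> (\<exists>!c. gcp_solution d I c)
    \<and> (\<forall>c. gcp_solution d I c \<longleftrightarrow>
          family_on I c \<and> (\<forall>i\<in>down_closure I. hier_coeff I c i = 1))"
proof -
  define P where "P c \<longleftrightarrow> family_on I c \<and> (\<forall>i\<in>down_closure I. hier_coeff I c i = 1)" for c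
  have IsubD: "I \<subseteq> down_closure I" by (auto simp: down_closure_def)
  have finD: "finite (down_closure I)" using fin_down assms(1,3) by blast
  obtain c0 where c0: "family_on I c0" "\<forall>i\<in>I. (\<Sum>j\<in>{j\<in>I. i \<le> j}. c0 j) = 1"
    using exist_sol[OF assms(1), of "\<lambda>_. 1"] by blast
  have Pc0: "P c0"
    unfolding P_def
  proof (intro conjI ballI c0(1))
    fix i assume "i \<in> down_closure I"
    then obtain m where "m \<in> I" "{j\<in>I. i \<le> j} = {j\<in>I. m \<le> j}"
      using min_elem[OF assms(1) assms(4)] by blast
    then show "hier_coeff I c0 i = 1" using c0(2) by (simp add: hier_coeff_def)
  qed
  have uniq: "c = c'" if "P c" "P c'" for c c'
  proof -
    have "\<forall>i\<in>I. (\<Sum>j\<in>{j\<in>I. i \<le> j}. c j) = (\<Sum>j\<in>{j\<in>I. i \<le> j}. c' j)"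
    proof
      fix i assume "i \<in> I"
      then have "i \<in> down_closure I" using IsubD by blast
      then show "(\<Sum>j\<in>{j\<in>I. i \<le> j}. c j) = (\<Sum>j\<in>{j\<in>I. i \<le> j}. c' j)"
        using that unfolding P_def hier_coeff_def by simp
    qed
    then show ?thesis using uniq_sol[OF assms(1)] that unfolding P_def by blast
  qed
  have sol: "gcp_solution d I c \<longleftrightarrow> P c" for c
  proof
    assume "P c"
    then have feas: "gcp_feasible I c" by (auto simp: P_def gcp_feasible_def)
    have "gcp_objective d I c' \<le> gcp_objective d I c" if "gcp_feasible I c'" for c'
      unfolding gcp_objective_def
    proof (rule sum_mono)
      fix i assume "i \<in> down_closure I"
      then show "(1/4) ^ norm1 d i * hier_coeff I c' i \<le> (1/4) ^ norm1 d i * hier_coeff I c i"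
        using \<open>P c\<close> that by (auto simp: P_def gcp_feasible_def)
    qed
    then show "gcp_solution d I c" using feas by (simp add: gcp_solution_def)
  next
    assume s: "gcp_solution d I c"
    have feas0: "gcp_feasible I c0" using Pc0 by (auto simp: P_def gcp_feasible_def)
    let ?t = "\<lambda>c i. (1/4::real) ^ norm1 d i * hier_coeff I c i"
    have le: "?t c i \<le> ?t c0 i" if "i \<in> down_closure I" for i
      using s that Pc0 by (auto simp: P_def gcp_solution_def gcp_feasible_def)
    have "gcp_objective d I c0 \<le> gcp_objective d I c" using s feas0 by (simp add: gcp_solution_def)
    then have "(\<Sum>i\<in>down_closure I. ?t c0 i - ?t c i) \<le> 0"
      by (simp add: gcp_objective_def sum_subtractf)
    moreover have "(\<Sum>i\<in>down_closure I. ?t c0 i - ?t c i) \<ge> 0"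
      using le by (intro sum_nonneg) auto
    ultimately have "(\<Sum>i\<in>down_closure I. ?t c0 i - ?t c i) = 0" by linarith
    then have z: "\<forall>i\<in>down_closure I. ?t c0 i - ?t c i = 0"
      using sum_nonneg_eq_0_iff[OF finD, of "\<lambda>i. ?t c0 i - ?t c i"] le by simp
    have "hier_coeff I c i = 1" if "i \<in> down_closure I" for i
    proof -
      have "?t c i = ?t c0 i" using z that by auto
      then have "hier_coeff I c i = hier_coeff I c0 i" by simp
      then show ?thesis using Pc0 that by (simp add: P_def)
    qed
    then show "P c" using s by (simp add: P_def gcp_solution_def gcp_feasible_def)
  qed
  have "\<exists>!c. P c" using Pc0 uniq by blast
  moreover have "\<exists>!c. gcp_solution d I c" using Pc0 uniq sol by blast
  ultimately show ?thesis using sol unfolding P_def by blast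
qed

end
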